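(* In the reinforcement-learning network model described in the context, there exists an $(\mathcal{F}_n)$-adapted martingale increment process $(\eta_n)_{n\in\mathbb{N}}$ (i.e. $\eta_{n+1}$ is $\mathcal{F}_{n+1}$-measurable with $\mathbb{E}(\eta_{n+1}\mid\mathcal{F}_n)=0$) such that for all $n\in\mathbb{N}$ $$x_{n+1}-x_n=\frac{F(x_n)}{T_n}+\eta_{n+1}+\widetilde R_{n+1},$$ and, for all $n,k\in\mathbb{N}$, $$|\eta_{n+1}|\le\frac{2\sum_{i,j\in\mathbb{V}}a_{ij}}{T_n},\qquad\sum_{n\ge k}|\widetilde R_{n+1}|\le\frac{2\sum_{k,l\in\mathbb{V}}a_{kl}}{T_k},$$ where $|\cdot|$ is the $L^1$ norm on $\mathbb{R}^{\mathbb{V}\times\mathbb{V}}$.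
   Context: Let $G=(\mathbb{V},E)$ be a finite graph with adjacency $\sim$. Let $a_{ij}=a_{ji}\ge0$, $>0$ only if $i\sim j$. Let $(p_W)_{W\subseteq\mathbb{V}}$ be nonnegative with $\sum_Wp_W=1$; for $i\sim j$, $p_{ij}=\sum_{W:i,j\in W}p_W$; $p_{ij}=0$ if $i\not\sim j$. Assume some $a_{ij}p_{ij}>0$. Let $v^0_{ij}=v^0_{ji}\ge0$, $>0$ iff $i\sim j$. Process: $V^0_{ij}=v^0_{ij}$, $V^n_{ij}=0$ if $i\not\sim j$, $V^n_i=\sum_jV^n_{ij}$; at each time $n$ each vertex $i$ independently chooses a neighbour $j$ with probability $V^n_{ij}/V^n_i$; independently Nature picks $W_n$ with $\mathbb{P}(W_n=W)=p_W$, i.i.d.; if $i,j\in W_n$, $i\sim j$ and $i,j$ choose each other, then $V^{n+1}_{ij}=V^{n+1}_{ji}=V^n_{ij}+a_{ij}$, else unchanged; $\mathcal{F}_n$ is the natural filtration. Let $T_n=\sum_{i,j}V^n_{ij}$ (ordered pairs), $x^n_{ij}=V^n_{ij}/T_n$, $x_n=(x^n_{ij})$. For an array $x$ let $x_i=\sum_jx_{ij}$, $H(x)=\sum_{(i,j):x_{ij}>0}a_{ij}p_{ij}x_{ij}^2/(x_ix_j)$ and $F(x)_{ij}=x_{ij}\big(a_{ij}p_{ij}\frac{x_{ij}}{x_ix_j}-H(x)\big)$ ($F_{ij}=0$ if $x_{ij}=0$; $a_{ij}p_{ij}x_{ij}/(x_ix_j):=0$ if $a_{ij}p_{ij}=0$).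 Let $\Delta^{n+1}_{ij}=V^{n+1}_{ij}-V^n_{ij}$, $\Delta^{n+1}_T=T_{n+1}-T_n$ and $\widetilde R^{ij}_{n+1}=(\Delta^{n+1}_{ij}-x^n_{ij}\Delta^{n+1}_T)\big(\frac1{T_{n+1}}-\frac1{T_n}\big)$, $\widetilde R_{n+1}=(\widetilde R^{ij}_{n+1})_{i,j}$. *)

theory Defs
  imports "HOL-Probability.Probability"
begin

definition pedge :: "('v \<Rightarrow> 'v \<Rightarrow> bool) \<Rightarrow> ('v set \<Rightarrow> real) \<Rightarrow> 'v \<Rightarrow> 'v \<Rightarrow> real" where
  "pedge adj pW i j = (if adj i j then (\<Sum>W\<in>{W. i \<in> W \<and> j \<in> W}. pW W) else 0)"

definition rowsum :: "('v::finite \<Rightarrow> 'v \<Rightarrow> real) \<Rightarrow> 'v \<Rightarrow> real" where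
  "rowsum x i = (\<Sum>j\<in>UNIV. x i j)"

definition Hfun :: "('v::finite \<Rightarrow> 'v \<Rightarrow> real) \<Rightarrow> ('v \<Rightarrow> 'v \<Rightarrow> real) \<Rightarrow> ('v \<Rightarrow> 'v \<Rightarrow> real) \<Rightarrow> real" where
  "Hfun a p x = (\<Sum>(i,j)\<in>{(i,j). x i j > 0}.
      a i j * p i j * (x i j)^2 / (rowsum x i * rowsum x j))"

definition Ffun :: "('v::finite \<Rightarrow> 'v \<Rightarrow> real) \<Rightarrow> ('v \<Rightarrow> 'v \<Rightarrow> real) \<Rightarrow> ('v \<Rightarrow> 'v \<Rightarrow> real) \<Rightarrow> 'v \<Rightarrow> 'v \<Rightarrow> real" where
  "Ffun a p x i j = (if x i j = 0 then 0 else
      x i j * ((if a i j * p i j = 0 then 0 else a i j * p i j * x i j / (rowsum x i * rowsum x j))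
               - Hfun a p x))"

definition norm1 :: "('v::finite \<Rightarrow> 'v \<Rightarrow> real) \<Rightarrow> real" where
  "norm1 X = (\<Sum>i\<in>UNIV. \<Sum>j\<in>UNIV. \<bar>X i j\<bar>)"

definition total :: "('v::finite \<Rightarrow> 'v \<Rightarrow> real) \<Rightarrow> real" where
  "total V = (\<Sum>i\<in>UNIV. \<Sum>j\<in>UNIV. V i j)"

definition normalize :: "('v::finite \<Rightarrow> 'v \<Rightarrow> real) \<Rightarrow> 'v \<Rightarrow> 'v \<Rightarrow> real" where
  "normalize V i j = V i j / total V"

definition Rtilde :: "('v::finite \<Rightarrow> 'v \<Rightarrow> real) \<Rightarrow> ('v \<Rightarrow> 'v \<Rightarrow> real) \<Rightarrow> 'v \<Rightarrow> 'v \<Rightarrow> real" where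
  "Rtilde Vn Vn1 i j =
     ((Vn1 i j - Vn i j) - normalize Vn i j * (total Vn1 - total Vn)) *
     (1 / total Vn1 - 1 / total Vn)"

end

theory Submission
  imports Defs
begin


lemma G1:
  fixes U U' :: "'v::finite \<Rightarrow> 'v \<Rightarrow> real"
  assumes "total U > 0" "total U' > 0"
  shows "normalize U' i j - normalize U i j =
     (U' i j - U i j - normalize U i j * (total U' - total U)) / total U + Rtilde U U' i j"
  using assms unfolding Rtilde_def normalize_def
  by (simp add: field_simps)

lemma total_diff: "total U' - total U = (\<Sum>i\<in>UNIV. \<Sum>j\<in>UNIV. U' i j - U i j)"
  unfolding total_def by (simp add: sum_subtractf)

lemma sum_normalize:
  assumes "total U > 0"
  shows "(\<Sum>i\<in>UNIV. \<Sum>j\<in>UNIV. normalize U i j) = 1"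
  using assms unfolding normalize_def total_def
  by (simp add: sum_divide_distrib[symmetric])

lemma G3:
  fixes U U' a :: "'v::finite \<Rightarrow> 'v \<Rightarrow> real"
  assumes T: "total U > 0" and U0: "\<And>i j. U i j \<ge> 0"
    and d0: "\<And>i j. U i j \<le> U' i j" and da: "\<And>i j. U' i j - U i j \<le> a i j"
  shows "norm1 (Rtilde U U') \<le> 2 * (\<Sum>i\<in>UNIV. \<Sum>j\<in>UNIV. a i j) * (1 / total U - 1 / total U')"
proof -
  define DT where "DT = total U' - total U"
  have DT0: "DT \<ge> 0" unfolding DT_def total_diff using d0 by (auto intro!: sum_nonneg)
  have DTA: "DT \<le> (\<Sum>i\<in>UNIV. \<Sum>j\<in>UNIV. a i j)" unfolding DT_def total_diff
    using da by (auto intro!: sum_mono)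
  have T': "total U' \<ge> total U" using DT0 DT_def by simp
  have le: "1 / total U' \<le> 1 / total U" using T T' by (intro divide_left_mono) auto
  have fac: "\<bar>1 / total U' - 1 / total U\<bar> = 1 / total U - 1 / total U'"
    using le by simp
  have fac0: "1 / total U - 1 / total U' \<ge> 0" using le by simp
  have "norm1 (Rtilde U U') = (\<Sum>i\<in>UNIV. \<Sum>j\<in>UNIV.
      \<bar>U' i j - U i j - normalize U i j * DT\<bar>) * (1 / total U - 1 / total U')"
    unfolding norm1_def Rtilde_def DT_def by (simp add: abs_mult fac sum_distrib_right)
  also have "\<dots> \<le> (\<Sum>i\<in>UNIV. \<Sum>j\<in>UNIV. (U' i j - U i j) + normalize U i j * DT) * (1 / total U - 1 / total U')"
  proof (intro mult_right_mono fac0 sum_mono)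
    fix i j
    have "normalize U i j \<ge> 0" unfolding normalize_def using U0 T by simp
    then show "\<bar>U' i j - U i j - normalize U i j * DT\<bar> \<le> U' i j - U i j + normalize U i j * DT"
      using d0[of i j] DT0 by (simp add: abs_if)
  qed
  also have "(\<Sum>i\<in>UNIV. \<Sum>j\<in>UNIV. (U' i j - U i j) + normalize U i j * DT) = DT + DT"
    using sum_normalize[OF T] by (simp add: sum.distrib DT_def total_diff sum_distrib_right[symmetric])
  also have "(DT + DT) * (1 / total U - 1 / total U') \<le> 2 * (\<Sum>i\<in>UNIV. \<Sum>j\<in>UNIV. a i j) * (1 / total U - 1 / total U')"
    using DTA fac0 by (intro mult_right_mono) auto
  finally show ?thesis .
qed

lemma G4:
  fixes d x a :: "'v::finite \<Rightarrow> 'v \<Rightarrow> real"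
  assumes T: "T > 0" and x0: "\<And>i j. x i j \<ge> 0" and x1: "(\<Sum>i\<in>UNIV. \<Sum>j\<in>UNIV. x i j) = 1"
    and da: "\<And>i j. \<bar>d i j\<bar> \<le> a i j"
  shows "norm1 (\<lambda>i j. (d i j - x i j * (\<Sum>k\<in>UNIV. \<Sum>l\<in>UNIV. d k l)) / T)
     \<le> 2 * (\<Sum>i\<in>UNIV. \<Sum>j\<in>UNIV. a i j) / T"
proof -
  define D where "D = (\<Sum>k\<in>UNIV. \<Sum>l\<in>UNIV. d k l)"
  define A where "A = (\<Sum>i\<in>UNIV. \<Sum>j\<in>UNIV. a i j)"
  have DA: "\<bar>D\<bar> \<le> A" unfolding D_def A_def
    by (rule order_trans[OF sum_abs] sum_mono order_trans[OF sum_abs] sum_mono da)+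
  have "norm1 (\<lambda>i j. (d i j - x i j * D) / T) = (\<Sum>i\<in>UNIV. \<Sum>j\<in>UNIV. \<bar>d i j - x i j * D\<bar>) / T"
    unfolding norm1_def using T by (simp add: sum_divide_distrib)
  also have "\<dots> \<le> (\<Sum>i\<in>UNIV. \<Sum>j\<in>UNIV. a i j + x i j * A) / T"
  proof (intro divide_right_mono sum_mono)
    fix i j
    have "\<bar>d i j - x i j * D\<bar> \<le> \<bar>d i j\<bar> + x i j * \<bar>D\<bar>" using abs_triangle_ineq4[of "d i j" "x i j * D"] x0[of i j] by (simp add: abs_mult)
    also have "\<dots> \<le> a i j + x i j * A" using da[of i j] DA x0[of i j] by (intro add_mono mult_left_mono) auto
    finally show "\<bar>d i j - x i j * D\<bar> \<le> a i j + x i j * A" .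
  qed (use T in auto)
  also have "(\<Sum>i\<in>UNIV. \<Sum>j\<in>UNIV. a i j + x i j * A) = A + A"
    using x1 by (simp add: sum.distrib A_def sum_distrib_right[symmetric])
  finally show ?thesis unfolding D_def A_def by simp
qed



definition qq :: "('v \<Rightarrow> 'v \<Rightarrow> bool) \<Rightarrow> ('v \<Rightarrow> 'v \<Rightarrow> real) \<Rightarrow> ('v::finite \<Rightarrow> 'v \<Rightarrow> real) \<Rightarrow> 'v \<Rightarrow> 'v \<Rightarrow> real" where
  "qq adj p U k l = (if adj k l then p k l * (U k l * U l k / (rowsum U k * rowsum U l)) else 0)"

lemma rowsum_normalize: "rowsum (normalize U) k = rowsum U k / total U"
  unfolding rowsum_def normalize_def by (simp add: sum_divide_distrib)

lemma G2:
  fixes U a p :: "'v::finite \<Rightarrow> 'v \<Rightarrow> real"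
  assumes T: "total U > 0" and U0: "\<And>i j. U i j \<ge> 0" and Uadj: "\<And>i j. U i j > 0 \<longleftrightarrow> adj i j"
    and Us: "\<And>i j. U i j = U j i"
  shows "Ffun a p (normalize U) i j = a i j * qq adj p U i j - normalize U i j * (\<Sum>k\<in>UNIV. \<Sum>l\<in>UNIV. a k l * qq adj p U k l)"
proof -
  let ?x = "normalize U"
  have xpos: "?x k l > 0 \<longleftrightarrow> adj k l" for k l using T Uadj[of k l] unfolding normalize_def
    by (simp add: zero_less_divide_iff)
  have x0: "?x k l = 0 \<longleftrightarrow> \<not> adj k l" for k l using T U0[of k l] Uadj[of k l] unfolding normalize_def
    by auto
  have trm: "a k l * p k l * (?x k l)^2 / (rowsum ?x k * rowsum ?x l) = a k l * qq adj p U k l"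
    if "adj k l" for k l
    using that T unfolding qq_def rowsum_normalize normalize_def
    by (simp add: Us[of l k] power2_eq_square field_simps)
  have H: "Hfun a p ?x = (\<Sum>k\<in>UNIV. \<Sum>l\<in>UNIV. a k l * qq adj p U k l)"
  proof -
    have "Hfun a p ?x = (\<Sum>z\<in>{z\<in>UNIV. ?x (fst z) (snd z) > 0}.
        a (fst z) (snd z) * p (fst z) (snd z) * (?x (fst z) (snd z))^2 / (rowsum ?x (fst z) * rowsum ?x (snd z)))"
      unfolding Hfun_def by (rule sum.cong) (auto simp: case_prod_beta)
    also have "\<dots> = (\<Sum>z\<in>UNIV. if ?x (fst z) (snd z) > 0 then
        a (fst z) (snd z) * p (fst z) (snd z) * (?x (fst z) (snd z))^2 / (rowsum ?x (fst z) * rowsum ?x (snd z)) else 0)"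
      by (rule sum.inter_filter) simp
    also have "\<dots> = (\<Sum>z\<in>UNIV. a (fst z) (snd z) * qq adj p U (fst z) (snd z))"
      by (rule sum.cong) (auto simp: xpos trm qq_def)
    also have "\<dots> = (\<Sum>(k,l)\<in>UNIV \<times> UNIV. a k l * qq adj p U k l)"
      by (simp add: case_prod_beta)
    also have "\<dots> = (\<Sum>k\<in>UNIV. \<Sum>l\<in>UNIV. a k l * qq adj p U k l)"
      by (rule sum.cartesian_product[symmetric])
    finally show ?thesis .
  qed
  show ?thesis
  proof (cases "adj i j")
    case False
    then show ?thesis unfolding Ffun_def using x0 by (simp add: qq_def)
  next
    case True
    have "a i j * qq adj p U i j = ?x i j * (if a i j * p i j = 0 then 0 else a i j * p i j * ?x i j / (rowsum ?x i * rowsum ?x j))"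
      using trm[OF True] by (auto simp: power2_eq_square field_simps)
    then show ?thesis unfolding Ffun_def H using x0[of i j] True by (simp add: right_diff_distrib)
  qed
qed

lemma G5:
  fixes U p :: "'v::finite \<Rightarrow> 'v \<Rightarrow> real"
  assumes U0: "\<And>i j. U i j \<ge> 0" and Uadj: "\<And>i j. U i j > 0 \<longleftrightarrow> adj i j"
    and p0: "\<And>i j. p i j \<ge> 0" and p1: "\<And>i j. p i j \<le> 1"
  shows "qq adj p U k l \<ge> 0" "qq adj p U k l \<le> 1"
proof -
  have rs: "U k l \<le> rowsum U k" for k l unfolding rowsum_def
    using member_le_sum[of l UNIV "U k"] U0 by auto
  have rs0: "rowsum U k \<ge> 0" for k unfolding rowsum_def using U0 by (simp add: sum_nonneg)
  show "qq adj p U k l \<ge> 0" unfolding qq_def using U0 p0 rs rs0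
    by (auto intro!: mult_nonneg_nonneg divide_nonneg_nonneg)
  show "qq adj p U k l \<le> 1"
  proof (cases "adj k l")
    case True
    have num: "U k l * U l k \<le> rowsum U k * rowsum U l"
      using rs[of k l] rs[of l k] U0[of k l] U0[of l k] rs0[of k] rs0[of l] by (intro mult_mono) auto
    have "rowsum U k * rowsum U l \<ge> 0" using rs0 by simp
    then have "U k l * U l k / (rowsum U k * rowsum U l) \<le> 1"
      using num by (auto simp add: divide_le_eq_1)
    moreover have "U k l * U l k / (rowsum U k * rowsum U l) \<ge> 0"
      using rs0 U0 by (auto intro!: mult_nonneg_nonneg divide_nonneg_nonneg)
    ultimately show ?thesis unfolding qq_def using True p0[of k l] p1[of k l]
      using mult_le_one[of "p k l" "U k l * U l k / (rowsum U k * rowsum U l)"] by simp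
  qed (simp add: qq_def)
qed

locale rl =
  fixes adj :: "'v::finite \<Rightarrow> 'v \<Rightarrow> bool"
    and a :: "'v \<Rightarrow> 'v \<Rightarrow> real"
    and pW :: "'v set \<Rightarrow> real"
    and v0 :: "'v \<Rightarrow> 'v \<Rightarrow> real"
    and M :: "'w measure"
    and F :: "nat \<Rightarrow> 'w measure"
    and V :: "nat \<Rightarrow> 'w \<Rightarrow> 'v \<Rightarrow> 'v \<Rightarrow> real"
    and C :: "nat \<Rightarrow> 'w \<Rightarrow> 'v \<Rightarrow> 'v"
    and W :: "nat \<Rightarrow> 'w \<Rightarrow> 'v set"
  assumes adj_sym: "\<And>i j. adj i j \<longleftrightarrow> adj j i"
    and adj_irrefl: "\<And>i. \<not> adj i i"
    and a_sym: "\<And>i j. a i j = a j i"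
    and a_nonneg: "\<And>i j. a i j \<ge> 0"
    and a_adj: "\<And>i j. a i j > 0 \<Longrightarrow> adj i j"
    and pW_nonneg: "\<And>S. pW S \<ge> 0"
    and pW_sum: "(\<Sum>S\<in>UNIV. pW S) = 1"
    and some_pos: "\<exists>i j. a i j * pedge adj pW i j > 0"
    and v0_sym: "\<And>i j. v0 i j = v0 j i"
    and v0_nonneg: "\<And>i j. v0 i j \<ge> 0"
    and v0_pos: "\<And>i j. v0 i j > 0 \<longleftrightarrow> adj i j"
    and M_prob: "prob_space M"
    and F_sub: "\<And>n. subalgebra M (F n)"
    and F_mono: "\<And>n. sets (F n) \<subseteq> sets (F (Suc n))"
    and V_meas: "\<And>n i j. (\<lambda>\<omega>. V n \<omega> i j) \<in> borel_measurable (F n)"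
    and C_meas: "\<And>n i. (\<lambda>\<omega>. C n \<omega> i) \<in> measurable (F (Suc n)) (count_space UNIV)"
    and W_meas: "\<And>n. W n \<in> measurable (F (Suc n)) (count_space UNIV)"
    and V_init: "\<And>\<omega>. \<omega> \<in> space M \<Longrightarrow> V 0 \<omega> = v0"
    and V_step: "\<And>n \<omega> i j. \<omega> \<in> space M \<Longrightarrow>
        V (Suc n) \<omega> i j = V n \<omega> i j +
          (if adj i j \<and> i \<in> W n \<omega> \<and> j \<in> W n \<omega> \<and> C n \<omega> i = j \<and> C n \<omega> j = i
           then a i j else 0)"
    and choice_law: "\<And>n c S. AE \<omega> in M.
        real_cond_exp M (F n)
          (indicator {\<omega>'\<in>space M. (\<forall>i. (\<exists>k. adj i k) \<longrightarrow> C n \<omega>' i = c i) \<and> W n \<omega>' = S}) \<omega>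
        = (\<Prod>i\<in>{i. \<exists>k. adj i k}. V n \<omega> i (c i) / rowsum (V n \<omega>) i) * pW S"
begin

abbreviation "p \<equiv> pedge adj pW"

lemma v0_zero: "\<not> adj i j \<Longrightarrow> v0 i j = 0"
  using v0_pos[of i j] v0_nonneg[of i j] by auto

lemma a_zero: "\<not> adj i j \<Longrightarrow> a i j = 0"
  using a_adj[of i j] a_nonneg[of i j] by fastforce

definition E :: "nat \<Rightarrow> 'v \<Rightarrow> 'v \<Rightarrow> 'w set" where
  "E n k l = {\<omega>\<in>space M. adj k l \<and> k \<in> W n \<omega> \<and> l \<in> W n \<omega> \<and> C n \<omega> k = l \<and> C n \<omega> l = k}"

lemma V_step': "\<omega> \<in> space M \<Longrightarrow> V (Suc n) \<omega> k l = V n \<omega> k l + a k l * indicator (E n k l) \<omega>"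
  using V_step[of \<omega> n k l] by (simp add: E_def indicator_def)

lemma V_ge: "\<omega> \<in> space M \<Longrightarrow> V n \<omega> i j \<ge> v0 i j"
proof (induction n)
  case 0 then show ?case using V_init by simp
next
  case (Suc n) then show ?case using V_step'[OF Suc.prems, of n i j] a_nonneg[of i j]
    by (simp add: indicator_def)
qed

lemma V_nadj: "\<omega> \<in> space M \<Longrightarrow> \<not> adj i j \<Longrightarrow> V n \<omega> i j = 0"
proof (induction n)
  case 0 then show ?case using V_init v0_zero by simp
next
  case (Suc n) then show ?case using V_step'[OF Suc.prems(1), of n i j] by (simp add: E_def)
qed

lemma V_nonneg: "\<omega> \<in> space M \<Longrightarrow> V n \<omega> i j \<ge> 0"
  using V_ge[where \<omega>=\<omega> and n=n and i=i and j=j] v0_nonneg[of i j] by linarith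

lemma V_pos_iff: "\<omega> \<in> space M \<Longrightarrow> V n \<omega> i j > 0 \<longleftrightarrow> adj i j"
  using V_ge[where \<omega>=\<omega> and n=n and i=i and j=j] v0_pos[of i j] V_nadj[where \<omega>=\<omega> and n=n and i=i and j=j] by force

lemma V_sym: "\<omega> \<in> space M \<Longrightarrow> V n \<omega> i j = V n \<omega> j i"
proof (induction n)
  case 0 then show ?case using V_init v0_sym by simp
next
  case (Suc n) then show ?case using V_step[OF Suc.prems, of n i j] V_step[OF Suc.prems, of n j i]
    adj_sym[of i j] a_sym[of i j] by auto
qed

definition A :: real where "A = (\<Sum>i\<in>UNIV. \<Sum>j\<in>UNIV. a i j)"

lemma A_nonneg: "A \<ge> 0" unfolding A_def using a_nonneg by (simp add: sum_nonneg)

lemma total_v0: "total v0 > 0"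
proof -
  obtain i j where "a i j * pedge adj pW i j > 0" using some_pos by blast
  then have "pedge adj pW i j \<noteq> 0" by auto
  then have "adj i j" unfolding pedge_def by (auto split: if_splits)
  then have "v0 i j > 0" using v0_pos by simp
  also have "v0 i j \<le> (\<Sum>j\<in>UNIV. v0 i j)" by (rule member_le_sum) (auto intro: v0_nonneg)
  also have "\<dots> \<le> total v0" unfolding total_def
    by (rule member_le_sum[of i UNIV "\<lambda>i. \<Sum>j\<in>UNIV. v0 i j"]) (auto intro: v0_nonneg sum_nonneg)
  finally show ?thesis .
qed

lemma total_ge: "\<omega> \<in> space M \<Longrightarrow> total (V n \<omega>) \<ge> total v0"
  unfolding total_def using V_ge by (intro sum_mono) auto

lemma total_pos: "\<omega> \<in> space M \<Longrightarrow> total (V n \<omega>) > 0"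
  using total_ge total_v0 by (meson less_le_trans)

lemma pedge_nonneg: "p i j \<ge> 0"
  unfolding pedge_def using pW_nonneg by (simp add: sum_nonneg)

lemma pedge_le1: "p i j \<le> 1"
proof -
  have "(\<Sum>W\<in>{W. i \<in> W \<and> j \<in> W}. pW W) \<le> (\<Sum>S\<in>UNIV. pW S)"
    by (rule sum_mono2) (auto intro: pW_nonneg)
  then show ?thesis unfolding pedge_def using pW_sum by auto
qed

lemma qq_bounds: "\<omega> \<in> space M \<Longrightarrow> qq adj p (V n \<omega>) k l \<ge> 0 \<and> qq adj p (V n \<omega>) k l \<le> 1"
  using G5[of "V n \<omega>" adj p k l] V_nonneg V_pos_iff pedge_nonneg pedge_le1 by blast

definition d :: "nat \<Rightarrow> 'w \<Rightarrow> 'v \<Rightarrow> 'v \<Rightarrow> real" where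
  "d n \<omega> k l = a k l * (indicator (E n k l) \<omega> - qq adj p (V n \<omega>) k l)"

definition eta :: "nat \<Rightarrow> 'w \<Rightarrow> 'v \<Rightarrow> 'v \<Rightarrow> real" where
  "eta n \<omega> i j = (1 / total (V n \<omega>)) * d n \<omega> i j
      + (- normalize (V n \<omega>) i j / total (V n \<omega>)) * (\<Sum>k\<in>UNIV. \<Sum>l\<in>UNIV. d n \<omega> k l)"

lemma eta_alt: "\<omega> \<in> space M \<Longrightarrow> eta n \<omega> i j =
   (d n \<omega> i j - normalize (V n \<omega>) i j * (\<Sum>k\<in>UNIV. \<Sum>l\<in>UNIV. d n \<omega> k l)) / total (V n \<omega>)"
proof -
  have gen: "(1 / T) * dd + (- x / T) * S = (dd - x * S) / T" for T dd x S :: real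
    by (simp add: diff_divide_distrib)
  show ?thesis unfolding eta_def by (rule gen)
qed

lemma d_abs: "\<omega> \<in> space M \<Longrightarrow> \<bar>d n \<omega> k l\<bar> \<le> a k l"
proof -
  assume \<omega>: "\<omega> \<in> space M"
  have qb: "qq adj p (V n \<omega>) k l \<ge> 0" "qq adj p (V n \<omega>) k l \<le> 1" using qq_bounds[OF \<omega>] by auto
  have h: "\<bar>indicator (E n k l) \<omega> - qq adj p (V n \<omega>) k l\<bar> \<le> (1::real)"
  proof (cases "\<omega> \<in> E n k l")
    case True then show ?thesis using qb by simp
  next
    case False then show ?thesis using qb by simp
  qed
  have "\<bar>d n \<omega> k l\<bar> = a k l * \<bar>indicator (E n k l) \<omega> - qq adj p (V n \<omega>) k l\<bar>"
    unfolding d_def abs_mult using a_nonneg[of k l] by simp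
  also have "\<dots> \<le> a k l" by (rule mult_left_le[OF h a_nonneg])
  finally show ?thesis .
qed

lemma eta_bound: "\<omega> \<in> space M \<Longrightarrow> norm1 (eta n \<omega>) \<le> 2 * A / total (V n \<omega>)"
proof -
  assume \<omega>: "\<omega> \<in> space M"
  have xn: "0 \<le> normalize (V n \<omega>) i j" for i j
    unfolding normalize_def by (rule divide_nonneg_nonneg[OF V_nonneg[OF \<omega>] less_imp_le[OF total_pos[OF \<omega>]]])
  have e: "eta n \<omega> = (\<lambda>i j. (d n \<omega> i j - normalize (V n \<omega>) i j * (\<Sum>k\<in>UNIV. \<Sum>l\<in>UNIV. d n \<omega> k l)) / total (V n \<omega>))"
    using eta_alt[OF \<omega>] by (intro ext) simp
  show ?thesis unfolding e A_def
    by (rule G4[OF total_pos[OF \<omega>] xn sum_normalize[OF total_pos[OF \<omega>]] d_abs[OF \<omega>]])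
qed

lemma eq_step: "\<omega> \<in> space M \<Longrightarrow>
          normalize (V (Suc n) \<omega>) i j - normalize (V n \<omega>) i j
          = Ffun a p (normalize (V n \<omega>)) i j / total (V n \<omega>)
            + eta n \<omega> i j + Rtilde (V n \<omega>) (V (Suc n) \<omega>) i j"
proof -
  assume \<omega>: "\<omega> \<in> space M"
  let ?x = "normalize (V n \<omega>)" and ?T = "total (V n \<omega>)"
  let ?q = "qq adj p (V n \<omega>)" and ?I = "\<lambda>k l. indicator (E n k l) \<omega> :: real"
  have T: "?T > 0" using total_pos[OF \<omega>] .
  have F: "Ffun a p ?x i j = a i j * ?q i j - ?x i j * (\<Sum>k\<in>UNIV. \<Sum>l\<in>UNIV. a k l * ?q k l)"
    by (rule G2) (use total_pos[OF \<omega>] V_nonneg[OF \<omega>] V_pos_iff[OF \<omega>] V_sym[OF \<omega>] in auto)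
  have dT: "total (V (Suc n) \<omega>) - ?T = (\<Sum>k\<in>UNIV. \<Sum>l\<in>UNIV. a k l * ?I k l)"
    unfolding total_diff using V_step'[OF \<omega>] by simp
  have sd: "(\<Sum>k\<in>UNIV. \<Sum>l\<in>UNIV. d n \<omega> k l) = (\<Sum>k\<in>UNIV. \<Sum>l\<in>UNIV. a k l * ?I k l) - (\<Sum>k\<in>UNIV. \<Sum>l\<in>UNIV. a k l * ?q k l)"
    unfolding d_def by (simp add: right_diff_distrib sum_subtractf)
  have "normalize (V (Suc n) \<omega>) i j - ?x i j =
     (V (Suc n) \<omega> i j - V n \<omega> i j - ?x i j * (total (V (Suc n) \<omega>) - ?T)) / ?T + Rtilde (V n \<omega>) (V (Suc n) \<omega>) i j"
    by (rule G1) (use total_pos[OF \<omega>] in auto)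
  also have "\<dots> = Ffun a p ?x i j / ?T + eta n \<omega> i j + Rtilde (V n \<omega>) (V (Suc n) \<omega>) i j"
  proof -
    have key: "(aa*I - x*S1)/T + R = (aa*q - x*S2)/T + (aa*(I-q) - x*(S1-S2))/T + R" for aa I q x S1 S2 T R :: real
      by (simp add: add_divide_distrib[symmetric] algebra_simps)
    have vv: "V (Suc n) \<omega> i j - V n \<omega> i j = a i j * ?I i j" using V_step'[OF \<omega>, of n i j] by simp
    show ?thesis unfolding eta_alt[OF \<omega>] F dT sd vv d_def
      by (rule key)
  qed
  finally show ?thesis .
qed

lemma R_bound: "\<omega> \<in> space M \<Longrightarrow> norm1 (Rtilde (V n \<omega>) (V (Suc n) \<omega>)) \<le> 2 * A * (1 / total (V n \<omega>) - 1 / total (V (Suc n) \<omega>))"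
proof -
  assume \<omega>: "\<omega> \<in> space M"
  have "V n \<omega> i j \<le> V (Suc n) \<omega> i j" for i j
    using a_nonneg[of i j] by (simp add: V_step'[OF \<omega>] indicator_def)
  moreover have "V (Suc n) \<omega> i j - V n \<omega> i j \<le> a i j" for i j
    using a_nonneg[of i j] by (simp add: V_step'[OF \<omega>] indicator_def)
  ultimately show ?thesis unfolding A_def
    by (intro G3 total_pos[OF \<omega>] V_nonneg[OF \<omega>])
qed

lemma total_mono: "\<omega> \<in> space M \<Longrightarrow> total (V n \<omega>) \<le> total (V (Suc n) \<omega>)"
proof -
  assume \<omega>: "\<omega> \<in> space M"
  have "V n \<omega> i j \<le> V (Suc n) \<omega> i j" for i j
    using a_nonneg[of i j] by (simp add: V_step'[OF \<omega>] indicator_def)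
  then show ?thesis unfolding total_def by (intro sum_mono)
qed

lemma R_sum: "\<omega> \<in> space M \<Longrightarrow>
          summable (\<lambda>m. norm1 (Rtilde (V (k + m) \<omega>) (V (Suc (k + m)) \<omega>))) \<and>
          (\<Sum>m. norm1 (Rtilde (V (k + m) \<omega>) (V (Suc (k + m)) \<omega>)))
            \<le> 2 * A / total (V k \<omega>)"
proof -
  assume \<omega>: "\<omega> \<in> space M"
  define f where "f m = 1 / total (V (k + m) \<omega>)" for m
  have fdec: "decseq f" unfolding f_def
    by (rule decseq_SucI) (use total_mono[OF \<omega>] total_pos[OF \<omega>] in \<open>auto intro!: divide_left_mono simp: add_Suc_right\<close>)
  have f0: "\<forall>m. 0 \<le> f m" unfolding f_def using total_pos[OF \<omega>] by (simp add: less_imp_le)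
  obtain L where L: "f \<longlonglongrightarrow> L" "\<forall>m. L \<le> f m" using decseq_convergent[OF fdec f0] by blast
  have L0: "L \<ge> 0" using L(1) f0 by (simp add: LIMSEQ_le_const)
  have s: "(\<lambda>m. 2 * A * (f m - f (Suc m))) sums (2 * A * (f 0 - L))"
    using sums_mult[OF telescope_sums'[OF L(1)], of "2 * A"] .
  have le: "norm1 (Rtilde (V (k + m) \<omega>) (V (Suc (k + m)) \<omega>)) \<le> 2 * A * (f m - f (Suc m))" for m
    using R_bound[OF \<omega>, of "k + m"] by (simp add: f_def add_Suc_right)
  have nn: "norm1 (Rtilde (V (k + m) \<omega>) (V (Suc (k + m)) \<omega>)) \<ge> 0" for m
    unfolding norm1_def by (simp add: sum_nonneg)
  have sm: "summable (\<lambda>m. norm1 (Rtilde (V (k + m) \<omega>) (V (Suc (k + m)) \<omega>)))"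
    by (rule summable_comparison_test'[OF sums_summable[OF s]]) (use le nn in auto)
  have "(\<Sum>m. norm1 (Rtilde (V (k + m) \<omega>) (V (Suc (k + m)) \<omega>))) \<le> 2 * A * (f 0 - L)"
    using suminf_le[OF le sm sums_summable[OF s]] sums_unique[OF s] by simp
  also have "\<dots> \<le> 2 * A * f 0" using A_nonneg L0 by (simp add: mult_left_mono)
  finally show ?thesis using sm by (simp add: f_def)
qed



lemma spF: "space (F n) = space M" using F_sub[of n] unfolding subalgebra_def by simp

lemma setsF: "sets (F n) \<subseteq> sets M" using F_sub[of n] unfolding subalgebra_def by simp

lemma subFF: "subalgebra (F (Suc n)) (F n)"
  unfolding subalgebra_def using F_mono[of n] spF by simp

lemma sfs: "sigma_finite_subalgebra M (F n)"
  by (rule finite_measure_subalgebra_is_sigma_finite)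
     (use M_prob F_sub in \<open>auto simp: finite_measure_subalgebra_def finite_measure_subalgebra_axioms_def prob_space_def\<close>)

lemma fm: "finite_measure M" using M_prob by (simp add: prob_space_def)

lemma mqq: "(\<lambda>\<omega>. qq adj p (V n \<omega>) k l) \<in> borel_measurable (F n)"
  using V_meas[measurable] unfolding qq_def rowsum_def by measurable

lemma mnorm: "(\<lambda>\<omega>. normalize (V n \<omega>) k l) \<in> borel_measurable (F n)"
  using V_meas[measurable] unfolding normalize_def total_def by measurable

lemma mtot: "(\<lambda>\<omega>. total (V n \<omega>)) \<in> borel_measurable (F n)"
  using V_meas[measurable] unfolding total_def by measurable

lemma mE: "E n k l \<in> sets (F (Suc n))"
proof -
  note W_meas[measurable] C_meas[measurable]
  have "E n k l = {\<omega>\<in>space (F (Suc n)). adj k l \<and> k \<in> W n \<omega> \<and> l \<in> W n \<omega> \<and> C n \<omega> k = l \<and> C n \<omega> l = k}"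
    unfolding E_def spF ..
  also have "\<dots> \<in> sets (F (Suc n))" by measurable
  finally show ?thesis .
qed

lemma mB: "{\<omega>'\<in>space M. (\<forall>i. (\<exists>k. adj i k) \<longrightarrow> C n \<omega>' i = c i) \<and> W n \<omega>' = S} \<in> sets M"
proof -
  note W_meas[measurable] C_meas[measurable]
  have "{\<omega>'\<in>space M. (\<forall>i. (\<exists>k. adj i k) \<longrightarrow> C n \<omega>' i = c i) \<and> W n \<omega>' = S} = {\<omega>'\<in>space (F (Suc n)). (\<forall>i. (\<exists>k. adj i k) \<longrightarrow> C n \<omega>' i = c i) \<and> W n \<omega>' = S}"
    unfolding spF ..
  also have "\<dots> \<in> sets (F (Suc n))" by measurable
  finally show ?thesis using setsF by blast
qed

lemma md: "(\<lambda>\<omega>. d n \<omega> k l) \<in> borel_measurable (F (Suc n))"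
proof -
  have [measurable]: "(\<lambda>\<omega>. qq adj p (V n \<omega>) k l) \<in> borel_measurable (F (Suc n))"
    by (rule measurable_from_subalg[OF subFF mqq])
  note mE[measurable]
  show ?thesis unfolding d_def by measurable
qed

lemma meta: "(\<lambda>\<omega>. eta n \<omega> i j) \<in> borel_measurable (F (Suc n))"
proof -
  have [measurable]: "(\<lambda>\<omega>. total (V n \<omega>)) \<in> borel_measurable (F (Suc n))"
    by (rule measurable_from_subalg[OF subFF mtot])
  have [measurable]: "(\<lambda>\<omega>. normalize (V n \<omega>) k l) \<in> borel_measurable (F (Suc n))" for k l
    by (rule measurable_from_subalg[OF subFF mnorm])
  note md[measurable]
  show ?thesis unfolding eta_def by measurable
qed



lemma rowsum_pos: "\<omega> \<in> space M \<Longrightarrow> adj i y \<Longrightarrow> rowsum (V n \<omega>) i > 0"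
proof -
  assume \<omega>: "\<omega> \<in> space M" and a: "adj i y"
  have "0 < V n \<omega> i y" using V_pos_iff[OF \<omega>] a by simp
  also have "\<dots> \<le> rowsum (V n \<omega>) i" unfolding rowsum_def
    by (rule member_le_sum) (use V_nonneg[OF \<omega>] in auto)
  finally show ?thesis .
qed

lemma condprob: "AE \<omega> in M. real_cond_exp M (F n) (indicator (E n k l)) \<omega> = qq adj p (V n \<omega>) k l"
proof (cases "adj k l")
  case False
  then have "E n k l = {}" by (simp add: E_def)
  then have e: "indicator (E n k l) = (\<lambda>_. 0::real)" by (simp add: fun_eq_iff)
  have "AE \<omega> in M. real_cond_exp M (F n) (\<lambda>_. 0::real) \<omega> = 0"
    using sigma_finite_subalgebra.real_cond_exp_F_meas[OF sfs, of "\<lambda>_. 0::real" n] by simp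
  then show ?thesis using False unfolding e by (simp add: qq_def)
next
  case True
  have kl: "k \<noteq> l" using True adj_irrefl by auto
  define N where "N = {i. \<exists>k. adj i k}"
  define D where "D m = (if m = k then {l} else if m = l then {k} else UNIV)" for m
  define SS where "SS = {S. k \<in> S \<and> l \<in> S}"
  define B where "B c S = {\<omega>'\<in>space M. (\<forall>i. (\<exists>k. adj i k) \<longrightarrow> C n \<omega>' i = c i) \<and> W n \<omega>' = S}" for c S
  define P where "P = PiE N D \<times> SS"
  have finP: "finite P" by (rule finite_subset[OF subset_UNIV]) simp
  have kN: "k \<in> N" "l \<in> N" using True adj_sym[of k l] unfolding N_def by auto
  have Bsets: "B c S \<in> sets M" for c S unfolding B_def by (rule mB)
  have ind_eq: "indicator (E n k l) \<omega> = (\<Sum>z\<in>P. indicator (B (fst z) (snd z)) \<omega> :: real)"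
    if \<omega>: "\<omega> \<in> space M" for \<omega>
  proof -
    define z0 where "z0 = (restrict (C n \<omega>) N, W n \<omega>)"
    have "(\<Sum>z\<in>P. indicator (B (fst z) (snd z)) \<omega> :: real) = (\<Sum>z\<in>P. if z = z0 then 1 else 0)"
    proof (rule sum.cong[OF refl])
      fix z assume "z \<in> P"
      then obtain c S where z: "z = (c,S)" "c \<in> PiE N D" "S \<in> SS" unfolding P_def by auto
      have "\<omega> \<in> B c S \<longleftrightarrow> z = z0"
      proof
        assume "\<omega> \<in> B c S"
        then have h: "\<forall>i\<in>N. C n \<omega> i = c i" "W n \<omega> = S" unfolding B_def N_def by auto
        have "c = restrict (C n \<omega>) N"
        proof
          fix i show "c i = restrict (C n \<omega>) N i"
            using h(1) z(2) by (cases "i \<in> N") (auto simp: PiE_def extensional_def)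
        qed
        then show "z = z0" using h(2) unfolding z z0_def by simp
      next
        assume "z = z0" then show "\<omega> \<in> B c S" using \<omega> z unfolding z0_def B_def N_def by auto
      qed
      then show "indicator (B (fst z) (snd z)) \<omega> = (if z = z0 then 1 else (0::real))"
        using z by (simp add: indicator_def)
    qed
    also have "\<dots> = (if z0 \<in> P then 1 else 0)" using finP by simp
    also have "z0 \<in> P \<longleftrightarrow> \<omega> \<in> E n k l"
    proof
      assume "z0 \<in> P"
      then have "\<forall>i\<in>N. C n \<omega> i \<in> D i" "W n \<omega> \<in> SS" unfolding z0_def P_def
        by (auto simp: restrict_PiE_iff)
      then have "C n \<omega> k \<in> D k" "C n \<omega> l \<in> D l" using kN by auto
      then show "\<omega> \<in> E n k l" using \<open>W n \<omega> \<in> SS\<close> \<omega> True kl unfolding E_def D_def SS_def by auto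
    next
      assume "\<omega> \<in> E n k l"
      then have "C n \<omega> i \<in> D i" for i unfolding E_def D_def by auto
      moreover have "W n \<omega> \<in> SS" using \<open>\<omega> \<in> E n k l\<close> unfolding E_def SS_def by auto
      ultimately show "z0 \<in> P" unfolding z0_def P_def by (auto simp: restrict_PiE_iff)
    qed
    finally show ?thesis by (simp add: indicator_def)
  qed
  have intB: "integrable M (indicator (B c S) :: 'w \<Rightarrow> real)" for c S
    using Bsets finite_measure.emeasure_finite[OF fm] by (simp add: less_top)
  have mEM: "E n k l \<in> sets M" using mE setsF by blast
  have ae1: "AE \<omega> in M. real_cond_exp M (F n) (indicator (E n k l)) \<omega> =
      real_cond_exp M (F n) (\<lambda>\<omega>. \<Sum>z\<in>P. indicator (B (fst z) (snd z)) \<omega>) \<omega>"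
    by (rule sigma_finite_subalgebra.real_cond_exp_cong[OF sfs])
       (use ind_eq Bsets mEM in \<open>auto intro!: AE_I2 borel_measurable_sum\<close>)
  have ae2: "AE \<omega> in M. real_cond_exp M (F n) (\<lambda>\<omega>. \<Sum>z\<in>P. indicator (B (fst z) (snd z)) \<omega>) \<omega>
      = (\<Sum>z\<in>P. real_cond_exp M (F n) (indicator (B (fst z) (snd z))) \<omega>)"
    using sigma_finite_subalgebra.real_cond_exp_sum[OF sfs, where f="\<lambda>z. indicator (B (fst z) (snd z))" and I=P]
      intB by simp
  have ae3: "AE \<omega> in M. \<forall>z\<in>P. real_cond_exp M (F n) (indicator (B (fst z) (snd z))) \<omega>
      = (\<Prod>i\<in>N. V n \<omega> i (fst z i) / rowsum (V n \<omega>) i) * pW (snd z)"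
  proof (rule AE_finite_allI[OF finP])
    fix z :: "('v \<Rightarrow> 'v) \<times> 'v set"
    show "AE \<omega> in M. real_cond_exp M (F n) (indicator (B (fst z) (snd z))) \<omega>
      = (\<Prod>i\<in>N. V n \<omega> i (fst z i) / rowsum (V n \<omega>) i) * pW (snd z)"
      using choice_law[of n "fst z" "snd z"] unfolding B_def N_def .
  qed
  have alg: "(\<Sum>z\<in>P. (\<Prod>i\<in>N. V n \<omega> i (fst z i) / rowsum (V n \<omega>) i) * pW (snd z)) = qq adj p (V n \<omega>) k l"
    if \<omega>: "\<omega> \<in> space M" for \<omega>
  proof -
    let ?g = "\<lambda>i y. V n \<omega> i y / rowsum (V n \<omega>) i"
    have "(\<Sum>z\<in>P. (\<Prod>i\<in>N. ?g i (fst z i)) * pW (snd z)) = (\<Sum>c\<in>PiE N D. \<Prod>i\<in>N. ?g i (c i)) * (\<Sum>S\<in>SS. pW S)"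
      unfolding P_def by (simp add: sum_product sum.cartesian_product case_prod_beta)
    also have "(\<Sum>c\<in>PiE N D. \<Prod>i\<in>N. ?g i (c i)) = (\<Prod>i\<in>N. \<Sum>y\<in>D i. ?g i y)"
      by (rule prod_sum_PiE[symmetric]) auto
    also have "\<dots> = (\<Prod>i\<in>{k,l}. \<Sum>y\<in>D i. ?g i y)"
    proof (rule prod.mono_neutral_right)
      show "finite N" by simp
      show "{k, l} \<subseteq> N" using kN by auto
      show "\<forall>i\<in>N - {k, l}. (\<Sum>y\<in>D i. ?g i y) = 1"
      proof
        fix i assume i: "i \<in> N - {k,l}"
        then obtain y where "adj i y" unfolding N_def by auto
        then have "rowsum (V n \<omega>) i > 0" by (rule rowsum_pos[OF \<omega>])
        then show "(\<Sum>y\<in>D i. ?g i y) = 1" using i unfolding D_def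
          by (simp add: sum_divide_distrib[symmetric] rowsum_def)
      qed
    qed
    also have "\<dots> = ?g k l * ?g l k" using kl by (simp add: D_def)
    also have "(\<Sum>S\<in>SS. pW S) = p k l" unfolding SS_def pedge_def using True by simp
    finally show ?thesis unfolding qq_def using True by simp
  qed
  show ?thesis using ae1 ae2 ae3 AE_space
  proof eventually_elim
    case (elim \<omega>)
    then show ?case using alg[of \<omega>] by simp
  qed
qed



lemma normalize_le1: "\<omega> \<in> space M \<Longrightarrow> normalize (V n \<omega>) i j \<le> 1"
proof -
  assume \<omega>: "\<omega> \<in> space M"
  have "V n \<omega> i j \<le> (\<Sum>j\<in>UNIV. V n \<omega> i j)" by (rule member_le_sum) (use V_nonneg[OF \<omega>] in auto)
  also have "\<dots> \<le> total (V n \<omega>)" unfolding total_def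
    by (rule member_le_sum[of i UNIV "\<lambda>i. \<Sum>j\<in>UNIV. V n \<omega> i j"]) (use V_nonneg[OF \<omega>] in \<open>auto intro: sum_nonneg\<close>)
  finally show ?thesis using total_pos[OF \<omega>] unfolding normalize_def by simp
qed

lemma normalize_nonneg: "\<omega> \<in> space M \<Longrightarrow> normalize (V n \<omega>) i j \<ge> 0"
  unfolding normalize_def by (rule divide_nonneg_nonneg[OF V_nonneg less_imp_le[OF total_pos]])

lemma invT: "\<omega> \<in> space M \<Longrightarrow> 1 / total (V n \<omega>) \<le> 1 / total v0"
proof -
  assume \<omega>: "\<omega> \<in> space M"
  have h: "total v0 \<le> total (V n \<omega>)" by (rule total_ge[OF \<omega>])
  have h2: "0 < total (V n \<omega>)" using h total_v0 by linarith
  show ?thesis by (rule divide_left_mono[OF h]) (use total_v0 h2 in auto)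
qed

lemma mdM: "(\<lambda>\<omega>. d n \<omega> k l) \<in> borel_measurable M"
  by (rule measurable_from_subalg[OF F_sub md])

lemma mFM: "f \<in> borel_measurable (F n) \<Longrightarrow> f \<in> borel_measurable M"
  by (rule measurable_from_subalg[OF F_sub])

lemma int_d: "integrable M (\<lambda>\<omega>. d n \<omega> k l)"
  by (rule finite_measure.integrable_const_bound[OF fm, where B="a k l"])
     (use d_abs mdM in \<open>auto intro!: AE_I2\<close>)

lemma mDD: "(\<lambda>\<omega>. \<Sum>k\<in>UNIV. \<Sum>l\<in>UNIV. d n \<omega> k l) \<in> borel_measurable M"
  using mdM by (intro borel_measurable_sum) auto

lemma DD_abs: "\<omega> \<in> space M \<Longrightarrow> \<bar>\<Sum>k\<in>UNIV. \<Sum>l\<in>UNIV. d n \<omega> k l\<bar> \<le> A"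
  unfolding A_def
  by (rule order_trans[OF sum_abs] sum_mono order_trans[OF sum_abs] sum_mono d_abs)+

lemma ce_d: "AE \<omega> in M. real_cond_exp M (F n) (\<lambda>\<omega>. d n \<omega> k l) \<omega> = 0"
proof -
  note sf = sfs[of n]
  have iI: "integrable M (indicator (E n k l) :: 'w \<Rightarrow> real)"
  proof -
    have "E n k l \<in> sets M" using mE setsF by blast
    then show ?thesis using finite_measure.emeasure_finite[OF fm, of "E n k l"]
      by (intro integrable_real_indicator) (auto simp: less_top)
  qed
  have iq: "integrable M (\<lambda>\<omega>. qq adj p (V n \<omega>) k l)"
    by (rule finite_measure.integrable_const_bound[OF fm, where B=1])
       (use qq_bounds mFM[OF mqq] in \<open>auto intro!: AE_I2\<close>)
  have iIq: "integrable M (\<lambda>\<omega>. indicator (E n k l) \<omega> - qq adj p (V n \<omega>) k l)"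
    using iI iq by auto
  have 1: "AE \<omega> in M. real_cond_exp M (F n) (\<lambda>\<omega>. a k l * (indicator (E n k l) \<omega> - qq adj p (V n \<omega>) k l)) \<omega>
      = a k l * real_cond_exp M (F n) (\<lambda>\<omega>. indicator (E n k l) \<omega> - qq adj p (V n \<omega>) k l) \<omega>"
    by (rule sigma_finite_subalgebra.real_cond_exp_cmult[OF sf iIq])
  have 2: "AE \<omega> in M. real_cond_exp M (F n) (\<lambda>\<omega>. indicator (E n k l) \<omega> - qq adj p (V n \<omega>) k l) \<omega>
      = real_cond_exp M (F n) (indicator (E n k l)) \<omega> - real_cond_exp M (F n) (\<lambda>\<omega>. qq adj p (V n \<omega>) k l) \<omega>"
    using sigma_finite_subalgebra.real_cond_exp_diff[OF sf iI iq] by simp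
  have 3: "AE \<omega> in M. real_cond_exp M (F n) (\<lambda>\<omega>. qq adj p (V n \<omega>) k l) \<omega> = qq adj p (V n \<omega>) k l"
    by (rule sigma_finite_subalgebra.real_cond_exp_F_meas[OF sf iq mqq])
  show ?thesis unfolding d_def using 1 2 3 condprob[of n k l]
    by eventually_elim simp
qed

lemma ce_DD: "AE \<omega> in M. real_cond_exp M (F n) (\<lambda>\<omega>. \<Sum>k\<in>UNIV. \<Sum>l\<in>UNIV. d n \<omega> k l) \<omega> = 0"
proof -
  note sf = sfs[of n]
  have ii: "integrable M (\<lambda>\<omega>. \<Sum>l\<in>UNIV. d n \<omega> k l)" for k using int_d by auto
  have 1: "AE \<omega> in M. real_cond_exp M (F n) (\<lambda>\<omega>. \<Sum>k\<in>UNIV. \<Sum>l\<in>UNIV. d n \<omega> k l) \<omega>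
     = (\<Sum>k\<in>UNIV. real_cond_exp M (F n) (\<lambda>\<omega>. \<Sum>l\<in>UNIV. d n \<omega> k l) \<omega>)"
    using sigma_finite_subalgebra.real_cond_exp_sum[OF sf, where f="\<lambda>k \<omega>. \<Sum>l\<in>UNIV. d n \<omega> k l" and I=UNIV] ii
    by simp
  have 2: "AE \<omega> in M. \<forall>k\<in>UNIV. real_cond_exp M (F n) (\<lambda>\<omega>. \<Sum>l\<in>UNIV. d n \<omega> k l) \<omega>
     = (\<Sum>l\<in>UNIV. real_cond_exp M (F n) (\<lambda>\<omega>. d n \<omega> k l) \<omega>)"
  proof (rule AE_finite_allI)
    show "finite (UNIV :: 'v set)" by simp
    fix k
    show "AE \<omega> in M. real_cond_exp M (F n) (\<lambda>\<omega>. \<Sum>l\<in>UNIV. d n \<omega> k l) \<omega>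
     = (\<Sum>l\<in>UNIV. real_cond_exp M (F n) (\<lambda>\<omega>. d n \<omega> k l) \<omega>)"
      using sigma_finite_subalgebra.real_cond_exp_sum[OF sf, where f="\<lambda>l \<omega>. d n \<omega> k l" and I=UNIV] int_d
      by simp
  qed
  have 3: "AE \<omega> in M. \<forall>z\<in>UNIV. real_cond_exp M (F n) (\<lambda>\<omega>. d n \<omega> (fst z) (snd z)) \<omega> = 0"
    by (rule AE_finite_allI) (use ce_d in auto)
  show ?thesis using 1 2 3 by eventually_elim auto
qed

lemma eta_int: "integrable M (\<lambda>\<omega>. (1 / total (V n \<omega>)) * d n \<omega> i j)"
              "integrable M (\<lambda>\<omega>. (- normalize (V n \<omega>) i j / total (V n \<omega>)) * (\<Sum>k\<in>UNIV. \<Sum>l\<in>UNIV. d n \<omega> k l))"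
proof -
  have mt: "(\<lambda>\<omega>. total (V n \<omega>)) \<in> borel_measurable M" by (rule mFM[OF mtot])
  have mn: "(\<lambda>\<omega>. normalize (V n \<omega>) i j) \<in> borel_measurable M" by (rule mFM[OF mnorm])
  show "integrable M (\<lambda>\<omega>. (1 / total (V n \<omega>)) * d n \<omega> i j)"
  proof (rule finite_measure.integrable_const_bound[OF fm, where B="1 / total v0 * a i j"])
    show "AE \<omega> in M. norm (1 / total (V n \<omega>) * d n \<omega> i j) \<le> 1 / total v0 * a i j"
    proof (rule AE_I2)
      fix \<omega> assume \<omega>: "\<omega> \<in> space M"
      have "norm (1 / total (V n \<omega>) * d n \<omega> i j) = 1 / total (V n \<omega>) * \<bar>d n \<omega> i j\<bar>"
        using abs_of_pos[OF total_pos[OF \<omega>, of n]] by (simp add: abs_mult)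
      also have "\<dots> \<le> 1 / total v0 * a i j"
        by (rule mult_mono[OF invT[OF \<omega>] d_abs[OF \<omega>]]) (use total_v0 in auto)
      finally show "norm (1 / total (V n \<omega>) * d n \<omega> i j) \<le> 1 / total v0 * a i j" .
    qed
    show "(\<lambda>\<omega>. 1 / total (V n \<omega>) * d n \<omega> i j) \<in> borel_measurable M" using mt mdM by measurable
  qed
  show "integrable M (\<lambda>\<omega>. (- normalize (V n \<omega>) i j / total (V n \<omega>)) * (\<Sum>k\<in>UNIV. \<Sum>l\<in>UNIV. d n \<omega> k l))"
  proof (rule finite_measure.integrable_const_bound[OF fm, where B="1 / total v0 * A"])
    show "AE \<omega> in M. norm ((- normalize (V n \<omega>) i j / total (V n \<omega>)) * (\<Sum>k\<in>UNIV. \<Sum>l\<in>UNIV. d n \<omega> k l)) \<le> 1 / total v0 * A"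
    proof (rule AE_I2)
      fix \<omega> assume \<omega>: "\<omega> \<in> space M"
      have "\<bar>- normalize (V n \<omega>) i j / total (V n \<omega>)\<bar> = normalize (V n \<omega>) i j * (1 / total (V n \<omega>))"
        using abs_of_pos[OF total_pos[OF \<omega>, of n]] normalize_nonneg[OF \<omega>, of n i j] by simp
      also have "\<dots> \<le> 1 * (1 / total v0)"
        by (rule mult_mono[OF normalize_le1[OF \<omega>] invT[OF \<omega>]]) (use less_imp_le[OF total_pos[OF \<omega>, of n]] in auto)
      finally have h: "\<bar>- normalize (V n \<omega>) i j / total (V n \<omega>)\<bar> \<le> 1 / total v0" by simp
      have "norm ((- normalize (V n \<omega>) i j / total (V n \<omega>)) * (\<Sum>k\<in>UNIV. \<Sum>l\<in>UNIV. d n \<omega> k l))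
         = \<bar>- normalize (V n \<omega>) i j / total (V n \<omega>)\<bar> * \<bar>\<Sum>k\<in>UNIV. \<Sum>l\<in>UNIV. d n \<omega> k l\<bar>"
        by (simp add: abs_mult)
      also have "\<dots> \<le> 1 / total v0 * A"
        by (rule mult_mono[OF h DD_abs[OF \<omega>]]) (use total_v0 in auto)
      finally show "norm ((- normalize (V n \<omega>) i j / total (V n \<omega>)) * (\<Sum>k\<in>UNIV. \<Sum>l\<in>UNIV. d n \<omega> k l)) \<le> 1 / total v0 * A" .
    qed
    show "(\<lambda>\<omega>. (- normalize (V n \<omega>) i j / total (V n \<omega>)) * (\<Sum>k\<in>UNIV. \<Sum>l\<in>UNIV. d n \<omega> k l)) \<in> borel_measurable M"
      using mt mn mDD by measurable
  qed
qed

lemma eta_integrable: "integrable M (\<lambda>\<omega>. eta n \<omega> i j)"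
  unfolding eta_def using eta_int by (rule Bochner_Integration.integrable_add)

lemma ce_eta: "AE \<omega> in M. real_cond_exp M (F n) (\<lambda>\<omega>. eta n \<omega> i j) \<omega> = 0"
proof -
  note sf = sfs[of n]
  have mt: "(\<lambda>\<omega>. 1 / total (V n \<omega>)) \<in> borel_measurable (F n)" using mtot by measurable
  have mn: "(\<lambda>\<omega>. - normalize (V n \<omega>) i j / total (V n \<omega>)) \<in> borel_measurable (F n)" using mtot mnorm by measurable
  have 1: "AE \<omega> in M. real_cond_exp M (F n) (\<lambda>\<omega>. eta n \<omega> i j) \<omega> =
     real_cond_exp M (F n) (\<lambda>\<omega>. (1 / total (V n \<omega>)) * d n \<omega> i j) \<omega>
     + real_cond_exp M (F n) (\<lambda>\<omega>. (- normalize (V n \<omega>) i j / total (V n \<omega>)) * (\<Sum>k\<in>UNIV. \<Sum>l\<in>UNIV. d n \<omega> k l)) \<omega>"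
    unfolding eta_def by (rule sigma_finite_subalgebra.real_cond_exp_add[OF sf eta_int(1) eta_int(2)])
  have 2: "AE \<omega> in M. real_cond_exp M (F n) (\<lambda>\<omega>. (1 / total (V n \<omega>)) * d n \<omega> i j) \<omega>
      = (1 / total (V n \<omega>)) * real_cond_exp M (F n) (\<lambda>\<omega>. d n \<omega> i j) \<omega>"
    by (rule sigma_finite_subalgebra.real_cond_exp_mult[OF sf mt mdM eta_int(1)])
  have 3: "AE \<omega> in M. real_cond_exp M (F n) (\<lambda>\<omega>. (- normalize (V n \<omega>) i j / total (V n \<omega>)) * (\<Sum>k\<in>UNIV. \<Sum>l\<in>UNIV. d n \<omega> k l)) \<omega>
      = (- normalize (V n \<omega>) i j / total (V n \<omega>)) * real_cond_exp M (F n) (\<lambda>\<omega>. \<Sum>k\<in>UNIV. \<Sum>l\<in>UNIV. d n \<omega> k l) \<omega>"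
    by (rule sigma_finite_subalgebra.real_cond_exp_mult[OF sf mn mDD eta_int(2)])
  show ?thesis using 1 2 3 ce_d[of n i j] ce_DD[of n] by eventually_elim simp
qed

lemma main: "\<exists>\<eta> :: nat \<Rightarrow> 'w \<Rightarrow> 'v \<Rightarrow> 'v \<Rightarrow> real.
      (\<forall>n i j. (\<lambda>\<omega>. \<eta> (Suc n) \<omega> i j) \<in> borel_measurable (F (Suc n))) \<and>
      (\<forall>n i j. integrable M (\<lambda>\<omega>. \<eta> (Suc n) \<omega> i j)) \<and>
      (\<forall>n i j. AE \<omega> in M. real_cond_exp M (F n) (\<lambda>\<omega>'. \<eta> (Suc n) \<omega>' i j) \<omega> = 0) \<and>
      (\<forall>n \<omega> i j. \<omega> \<in> space M \<longrightarrow>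
          normalize (V (Suc n) \<omega>) i j - normalize (V n \<omega>) i j
          = Ffun a (pedge adj pW) (normalize (V n \<omega>)) i j / total (V n \<omega>)
            + \<eta> (Suc n) \<omega> i j + Rtilde (V n \<omega>) (V (Suc n) \<omega>) i j) \<and>
      (\<forall>n \<omega>. \<omega> \<in> space M \<longrightarrow>
          norm1 (\<eta> (Suc n) \<omega>) \<le> 2 * (\<Sum>i\<in>UNIV. \<Sum>j\<in>UNIV. a i j) / total (V n \<omega>)) \<and>
      (\<forall>k \<omega>. \<omega> \<in> space M \<longrightarrow>
          summable (\<lambda>m. norm1 (Rtilde (V (k + m) \<omega>) (V (Suc (k + m)) \<omega>))) \<and>
          (\<Sum>m. norm1 (Rtilde (V (k + m) \<omega>) (V (Suc (k + m)) \<omega>)))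
            \<le> 2 * (\<Sum>i\<in>UNIV. \<Sum>j\<in>UNIV. a i j) / total (V k \<omega>))"
  apply (rule exI[of _ "\<lambda>m. eta (m - 1)"])
  using meta eta_integrable ce_eta eq_step eta_bound R_sum unfolding A_def
  by simp

end

theorem lemma1:
  fixes adj :: "'v::finite \<Rightarrow> 'v \<Rightarrow> bool"
    and a :: "'v \<Rightarrow> 'v \<Rightarrow> real"
    and pW :: "'v set \<Rightarrow> real"
    and v0 :: "'v \<Rightarrow> 'v \<Rightarrow> real"
    and M :: "'w measure"
    and F :: "nat \<Rightarrow> 'w measure"
    and V :: "nat \<Rightarrow> 'w \<Rightarrow> 'v \<Rightarrow> 'v \<Rightarrow> real"
    and C :: "nat \<Rightarrow> 'w \<Rightarrow> 'v \<Rightarrow> 'v"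
    and W :: "nat \<Rightarrow> 'w \<Rightarrow> 'v set"
  assumes adj_sym: "\<And>i j. adj i j \<longleftrightarrow> adj j i"
    and adj_irrefl: "\<And>i. \<not> adj i i"
    and a_sym: "\<And>i j. a i j = a j i"
    and a_nonneg: "\<And>i j. a i j \<ge> 0"
    and a_adj: "\<And>i j. a i j > 0 \<Longrightarrow> adj i j"
    and pW_nonneg: "\<And>S. pW S \<ge> 0"
    and pW_sum: "(\<Sum>S\<in>UNIV. pW S) = 1"
    and some_pos: "\<exists>i j. a i j * pedge adj pW i j > 0"
    and v0_sym: "\<And>i j. v0 i j = v0 j i"
    and v0_nonneg: "\<And>i j. v0 i j \<ge> 0"
    and v0_pos: "\<And>i j. v0 i j > 0 \<longleftrightarrow> adj i j"
    and M_prob: "prob_space M"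
    and F_sub: "\<And>n. subalgebra M (F n)"
    and F_mono: "\<And>n. sets (F n) \<subseteq> sets (F (Suc n))"
    and V_meas: "\<And>n i j. (\<lambda>\<omega>. V n \<omega> i j) \<in> borel_measurable (F n)"
    and C_meas: "\<And>n i. (\<lambda>\<omega>. C n \<omega> i) \<in> measurable (F (Suc n)) (count_space UNIV)"
    and W_meas: "\<And>n. W n \<in> measurable (F (Suc n)) (count_space UNIV)"
    and V_init: "\<And>\<omega>. \<omega> \<in> space M \<Longrightarrow> V 0 \<omega> = v0"
    and V_step: "\<And>n \<omega> i j. \<omega> \<in> space M \<Longrightarrow>
        V (Suc n) \<omega> i j = V n \<omega> i j +
          (if adj i j \<and> i \<in> W n \<omega> \<and> j \<in> W n \<omega> \<and> C n \<omega> i = j \<and> C n \<omega> j = i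
           then a i j else 0)"
    and choice_law: "\<And>n c S. AE \<omega> in M.
        real_cond_exp M (F n)
          (indicator {\<omega>'\<in>space M. (\<forall>i. (\<exists>k. adj i k) \<longrightarrow> C n \<omega>' i = c i) \<and> W n \<omega>' = S}) \<omega>
        = (\<Prod>i\<in>{i. \<exists>k. adj i k}. V n \<omega> i (c i) / rowsum (V n \<omega>) i) * pW S"
  shows "\<exists>\<eta> :: nat \<Rightarrow> 'w \<Rightarrow> 'v \<Rightarrow> 'v \<Rightarrow> real.
      (\<forall>n i j. (\<lambda>\<omega>. \<eta> (Suc n) \<omega> i j) \<in> borel_measurable (F (Suc n))) \<and>
      (\<forall>n i j. integrable M (\<lambda>\<omega>. \<eta> (Suc n) \<omega> i j)) \<and>
      (\<forall>n i j. AE \<omega> in M. real_cond_exp M (F n) (\<lambda>\<omega>'. \<eta> (Suc n) \<omega>' i j) \<omega> = 0) \<and>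
      (\<forall>n \<omega> i j. \<omega> \<in> space M \<longrightarrow>
          normalize (V (Suc n) \<omega>) i j - normalize (V n \<omega>) i j
          = Ffun a (pedge adj pW) (normalize (V n \<omega>)) i j / total (V n \<omega>)
            + \<eta> (Suc n) \<omega> i j + Rtilde (V n \<omega>) (V (Suc n) \<omega>) i j) \<and>
      (\<forall>n \<omega>. \<omega> \<in> space M \<longrightarrow>
          norm1 (\<eta> (Suc n) \<omega>) \<le> 2 * (\<Sum>i\<in>UNIV. \<Sum>j\<in>UNIV. a i j) / total (V n \<omega>)) \<and>
      (\<forall>k \<omega>. \<omega> \<in> space M \<longrightarrow>
          summable (\<lambda>m. norm1 (Rtilde (V (k + m) \<omega>) (V (Suc (k + m)) \<omega>))) \<and>
          (\<Sum>m. norm1 (Rtilde (V (k + m) \<omega>) (V (Suc (k + m)) \<omega>)))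
            \<le> 2 * (\<Sum>i\<in>UNIV. \<Sum>j\<in>UNIV. a i j) / total (V k \<omega>))"
proof -
  interpret rl adj a pW v0 M F V C W
    by (rule rl.intro) (fact assms)+
  show ?thesis by (rule main)
qed

end
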